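(* Fix a task $(\mathcal{S},\mathcal{A},\_,d_0,\mathcal{R},\gamma)$ and let $\Pi_{\mathrm{NS}}$ be the set of all non-stationary policies. Let $\mathcal{T},\mathcal{T}'$ be transition models such that $J_{\mathcal{T}}$ and $J_{\mathcal{T}'}$ are both non-trivial on $\Pi_{\mathrm{NS}}$ and are not equivalent on $\Pi_{\mathrm{NS}}$. Then $(\mathcal{T},\mathcal{T}')$ is exploitable relative to $\Pi_{\mathrm{NS}}$ and this task.
   Context: A Markov decision process (MDP) is $(\mathcal{S},\mathcal{A},\mathcal{T},d_0,\mathcal{R},\gamma)$ with finite state space $\mathcal{S}$, finite action space $\mathcal{A}$ with $|\mathcal{A}|>1$, transition model $\mathcal{T}:\mathcal{S}\times\mathcal{A}\to\Delta(\mathcal{S})$, initial distribution $d_0\in\Delta(\mathcal{S})$, reward $\mathcal{R}:\mathcal{S}\times\mathcal{A}\to\mathbb{R}$, discount $\gamma\in[0,1)$; all states are assumed reachable. A task is an MDP without its transition model, $(\mathcal{S},\mathcal{A},\_,d_0,\mathcal{R},\gamma)$. A non-stationary policy is a sequence $\pi=(\pi_0,\pi_1,\dots)$ of maps $\pi_t:\mathcal{S}\to\Delta(\mathcal{A})$ (action at time $t$ drawn from $\pi_t(\cdot\mid s_t)$). For a transition model $\mathcal{T}$, $J_{\mathcal{T}}(\pi)=\mathbb{E}\big[\sum_{t\ge0}\gamma^t\mathcal{R}(s_t,a_t)\big]$ where $s_0\sim d_0$, $a_t\sim\pi_t(\cdot\mid s_t)$, $s_{t+1}\sim\mathcal{T}(\cdot\mid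 s_t,a_t)$. A value function $J$ is trivial on a policy set $\Pi$ if it is constant on $\Pi$. Two value functions $J_1,J_2$ are equivalent on $\Pi$ if for all $\pi,\pi'\in\Pi$, $J_1(\pi)\ge J_1(\pi')\iff J_2(\pi)\ge J_2(\pi')$. Transition models $\mathcal{T},\mathcal{T}'$ are exploitable relative to $\Pi$ and a task if there exist $\pi,\pi'\in\Pi$ with $J_{\mathcal{T}}(\pi)>J_{\mathcal{T}}(\pi')$ and $J_{\mathcal{T}'}(\pi')>J_{\mathcal{T}'}(\pi)$; otherwise unexploitable. *)

theory Defs
  imports "HOL-Probability.Probability"
begin

text \<open>A non-stationary policy is pi :: nat => 's => 'a pmf (pi t s is the action distribution at time t).\<close>

type_synonym ('s, 'a) transition = "'s \<Rightarrow> 'a \<Rightarrow> 's pmf"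
type_synonym ('s, 'a) ns_policy = "nat \<Rightarrow> 's \<Rightarrow> 'a pmf"

fun state_dist :: "('s, 'a) transition \<Rightarrow> 's pmf \<Rightarrow> ('s, 'a) ns_policy \<Rightarrow> nat \<Rightarrow> 's pmf" where
  "state_dist T d0 \<pi> 0 = d0"
| "state_dist T d0 \<pi> (Suc t) =
     bind_pmf (state_dist T d0 \<pi> t) (\<lambda>s. bind_pmf (\<pi> t s) (\<lambda>a. T s a))"

definition step_reward :: "('s, 'a) transition \<Rightarrow> 's pmf \<Rightarrow> ('s \<Rightarrow> 'a \<Rightarrow> real)
    \<Rightarrow> ('s, 'a) ns_policy \<Rightarrow> nat \<Rightarrow> real" where
  "step_reward T d0 R \<pi> t =
     measure_pmf.expectation (state_dist T d0 \<pi> t)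
       (\<lambda>s. measure_pmf.expectation (\<pi> t s) (\<lambda>a. R s a))"

definition J :: "('s, 'a) transition \<Rightarrow> 's pmf \<Rightarrow> ('s \<Rightarrow> 'a \<Rightarrow> real) \<Rightarrow> real
    \<Rightarrow> ('s, 'a) ns_policy \<Rightarrow> real" where
  "J T d0 R \<gamma> \<pi> = (\<Sum>t. \<gamma> ^ t * step_reward T d0 R \<pi> t)"

definition all_reachable :: "('s, 'a) transition \<Rightarrow> 's pmf \<Rightarrow> bool" where
  "all_reachable T d0 \<longleftrightarrow> (\<forall>s. \<exists>\<pi> t. pmf (state_dist T d0 \<pi> t) s > 0)"

definition trivial_on :: "('p \<Rightarrow> real) \<Rightarrow> 'p set \<Rightarrow> bool" where
  "trivial_on Jf P \<longleftrightarrow> (\<exists>c. \<forall>\<pi>\<in>P. Jf \<pi> = c)"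

definition equivalent_on :: "('p \<Rightarrow> real) \<Rightarrow> ('p \<Rightarrow> real) \<Rightarrow> 'p set \<Rightarrow> bool" where
  "equivalent_on J1 J2 P \<longleftrightarrow>
     (\<forall>\<pi>\<in>P. \<forall>\<pi>'\<in>P. J1 \<pi> \<ge> J1 \<pi>' \<longleftrightarrow> J2 \<pi> \<ge> J2 \<pi>')"

definition exploitable :: "('s, 'a) transition \<Rightarrow> ('s, 'a) transition \<Rightarrow> ('s, 'a) ns_policy set
    \<Rightarrow> 's pmf \<Rightarrow> ('s \<Rightarrow> 'a \<Rightarrow> real) \<Rightarrow> real \<Rightarrow> bool" where
  "exploitable T T' P d0 R \<gamma> \<longleftrightarrow>
     (\<exists>\<pi>\<in>P. \<exists>\<pi>'\<in>P. J T d0 R \<gamma> \<pi> > J T d0 R \<gamma> \<pi>' \<and> J T' d0 R \<gamma> \<pi>' > J T' d0 R \<gamma> \<pi>)"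

end

theory Submission
  imports Defs
begin

lemma exp_fin: "measure_pmf.expectation (M :: ('b::finite) pmf) f = (\<Sum>a\<in>UNIV. f a * pmf M a)"
  by (rule integral_measure_pmf_real) auto

lemma sum_pmf_UNIV: "(\<Sum>a\<in>UNIV. pmf (M::'b::finite pmf) a) = 1"
  by (rule sum_pmf_eq_1) auto

lemma sd_Suc: "pmf (state_dist T d0 x (Suc t)) s' =
  (\<Sum>s\<in>UNIV. \<Sum>a\<in>UNIV. pmf (state_dist T d0 x t) s * pmf (x t s) a * pmf (T s a) s')"
  for T :: "('s::finite,'a::finite) transition"
  by (simp add: pmf_bind exp_fin sum_distrib_left sum_distrib_right mult.commute mult.left_commute)

lemma sr_eq: "step_reward T d0 R x t =
  (\<Sum>s\<in>UNIV. \<Sum>a\<in>UNIV. pmf (state_dist T d0 x t) s * pmf (x t s) a * R s a)"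
  for T :: "('s::finite,'a::finite) transition"
  by (simp add: step_reward_def exp_fin sum_distrib_left sum_distrib_right mult.commute mult.left_commute)

definition Rm :: "('s::finite \<Rightarrow> 'a::finite \<Rightarrow> real) \<Rightarrow> real" where
  "Rm R = (\<Sum>s\<in>UNIV. \<Sum>a\<in>UNIV. \<bar>R s a\<bar>)"

lemma R_le: "\<bar>R s a\<bar> \<le> Rm R"
proof -
  have "\<bar>R s a\<bar> \<le> (\<Sum>a\<in>UNIV. \<bar>R s a\<bar>)"
    by (rule member_le_sum) auto
  also have "\<dots> \<le> Rm R" unfolding Rm_def
    by (rule member_le_sum[where f="\<lambda>s. \<Sum>a\<in>UNIV. \<bar>R s a\<bar>"]) (auto intro: sum_nonneg)
  finally show ?thesis .
qed

lemma Rm_nonneg: "0 \<le> Rm R"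
  unfolding Rm_def by (auto intro: sum_nonneg)

lemma keyK:
  fixes u v :: "'s::finite \<Rightarrow> real" and p q :: "'s \<Rightarrow> 'a::finite \<Rightarrow> real"
  assumes p0: "\<And>s a. 0 \<le> p s a" and p1: "\<And>s. (\<Sum>a\<in>UNIV. p s a) = 1"
    and v0: "\<And>s. 0 \<le> v s" and v1: "(\<Sum>s\<in>UNIV. v s) = 1"
    and pq: "\<And>s a. \<bar>p s a - q s a\<bar> \<le> \<delta>"
  shows "(\<Sum>s\<in>UNIV. \<Sum>a\<in>UNIV. \<bar>u s * p s a - v s * q s a\<bar>)
     \<le> (\<Sum>s\<in>UNIV. \<bar>u s - v s\<bar>) + real CARD('a) * \<delta>"
proof -
  have "(\<Sum>s\<in>UNIV. \<Sum>a\<in>UNIV. \<bar>u s * p s a - v s * q s a\<bar>)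
     \<le> (\<Sum>s\<in>UNIV. \<Sum>a\<in>UNIV. \<bar>u s - v s\<bar> * p s a + v s * \<delta>)"
  proof (intro sum_mono)
    fix s a
    have e: "u s * p s a - v s * q s a = (u s - v s) * p s a + v s * (p s a - q s a)"
      by (simp add: algebra_simps)
    have "\<bar>u s * p s a - v s * q s a\<bar> \<le> \<bar>(u s - v s) * p s a\<bar> + \<bar>v s * (p s a - q s a)\<bar>"
      unfolding e by (rule abs_triangle_ineq)
    also have "\<dots> = \<bar>u s - v s\<bar> * p s a + v s * \<bar>p s a - q s a\<bar>"
      using p0[of s a] v0[of s] by (simp only: abs_mult abs_of_nonneg)
    also have "\<dots> \<le> \<bar>u s - v s\<bar> * p s a + v s * \<delta>"
      using pq[of s a] v0[of s] by (simp add: mult_left_mono)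
    finally show "\<bar>u s * p s a - v s * q s a\<bar> \<le> \<bar>u s - v s\<bar> * p s a + v s * \<delta>" .
  qed
  also have "\<dots> = (\<Sum>s\<in>UNIV. \<bar>u s - v s\<bar> * (\<Sum>a\<in>UNIV. p s a) + real CARD('a) * (v s * \<delta>))"
    by (rule sum.cong[OF refl]) (simp add: sum.distrib sum_distrib_left)
  also have "\<dots> = (\<Sum>s\<in>UNIV. \<bar>u s - v s\<bar>) + real CARD('a) * ((\<Sum>s\<in>UNIV. v s) * \<delta>)"
    by (simp add: p1 sum.distrib sum_distrib_left sum_distrib_right)
  also have "\<dots> = (\<Sum>s\<in>UNIV. \<bar>u s - v s\<bar>) + real CARD('a) * \<delta>"
    by (simp add: v1)
  finally show ?thesis .
qed

lemma sd_close:
  fixes T :: "('s::finite,'a::finite) transition"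
  assumes cl: "\<And>t s a. t < N \<Longrightarrow> \<bar>pmf (x t s) a - pmf (y t s) a\<bar> \<le> \<delta>"
  shows "t \<le> N \<Longrightarrow> (\<Sum>s\<in>UNIV. \<bar>pmf (state_dist T d0 x t) s - pmf (state_dist T d0 y t) s\<bar>)
     \<le> real t * real CARD('a) * \<delta>"
proof (induction t)
  case 0
  then show ?case by simp
next
  case (Suc t)
  let ?u = "\<lambda>s. pmf (state_dist T d0 x t) s" and ?v = "\<lambda>s. pmf (state_dist T d0 y t) s"
  let ?p = "\<lambda>s a. pmf (x t s) a" and ?q = "\<lambda>s a. pmf (y t s) a"
  have "(\<Sum>s'\<in>UNIV. \<bar>pmf (state_dist T d0 x (Suc t)) s' - pmf (state_dist T d0 y (Suc t)) s'\<bar>)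
    = (\<Sum>s'\<in>UNIV. \<bar>\<Sum>s\<in>UNIV. \<Sum>a\<in>UNIV. (?u s * ?p s a - ?v s * ?q s a) * pmf (T s a) s'\<bar>)"
    unfolding sd_Suc by (simp add: sum_subtractf[symmetric] algebra_simps)
  also have "\<dots> \<le> (\<Sum>s'\<in>UNIV. \<Sum>s\<in>UNIV. \<Sum>a\<in>UNIV. \<bar>?u s * ?p s a - ?v s * ?q s a\<bar> * pmf (T s a) s')"
    by (intro sum_mono order.trans[OF sum_abs] ) (simp add: abs_mult)
  also have "\<dots> = (\<Sum>s\<in>UNIV. \<Sum>a\<in>UNIV. \<bar>?u s * ?p s a - ?v s * ?q s a\<bar> * (\<Sum>s'\<in>UNIV. pmf (T s a) s'))"
  proof -
    have "(\<Sum>s'\<in>UNIV. \<Sum>s\<in>UNIV. \<Sum>a\<in>UNIV. \<bar>?u s * ?p s a - ?v s * ?q s a\<bar> * pmf (T s a) s')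
      = (\<Sum>s\<in>UNIV. \<Sum>s'\<in>UNIV. \<Sum>a\<in>UNIV. \<bar>?u s * ?p s a - ?v s * ?q s a\<bar> * pmf (T s a) s')"
      by (rule sum.swap)
    also have "\<dots> = (\<Sum>s\<in>UNIV. \<Sum>a\<in>UNIV. \<Sum>s'\<in>UNIV. \<bar>?u s * ?p s a - ?v s * ?q s a\<bar> * pmf (T s a) s')"
      by (rule sum.cong[OF refl], rule sum.swap)
    finally show ?thesis by (simp add: sum_distrib_left)
  qed
  also have "\<dots> = (\<Sum>s\<in>UNIV. \<Sum>a\<in>UNIV. \<bar>?u s * ?p s a - ?v s * ?q s a\<bar>)"
    by (simp add: sum_pmf_UNIV)
  also have "\<dots> \<le> (\<Sum>s\<in>UNIV. \<bar>?u s - ?v s\<bar>) + real CARD('a) * \<delta>"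
    using Suc.prems by (intro keyK) (auto simp: sum_pmf_UNIV intro: cl)
  also have "\<dots> \<le> real t * real CARD('a) * \<delta> + real CARD('a) * \<delta>"
    using Suc by simp
  finally show ?case by (simp add: algebra_simps)
qed

lemma sr_bound:
  fixes T :: "('s::finite,'a::finite) transition"
  shows "\<bar>step_reward T d0 R x t\<bar> \<le> Rm R"
proof -
  have "\<bar>step_reward T d0 R x t\<bar> \<le> (\<Sum>s\<in>UNIV. \<Sum>a\<in>UNIV. pmf (state_dist T d0 x t) s * pmf (x t s) a * Rm R)"
    unfolding sr_eq
    by (intro order.trans[OF sum_abs] sum_mono order.trans[OF sum_abs])
       (simp add: abs_mult R_le mult_left_mono)
  also have "\<dots> = Rm R"
    by (simp add: sum_distrib_left[symmetric] sum_distrib_right[symmetric] sum_pmf_UNIV)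
  finally show ?thesis .
qed

lemma sr_close:
  fixes T :: "('s::finite,'a::finite) transition"
  assumes cl: "\<And>t s a. t < N \<Longrightarrow> \<bar>pmf (x t s) a - pmf (y t s) a\<bar> \<le> \<delta>" and tN: "t < N"
  shows "\<bar>step_reward T d0 R x t - step_reward T d0 R y t\<bar> \<le> Rm R * (real N * real CARD('a) * \<delta> + real CARD('a) * \<delta>)"
proof -
  let ?u = "\<lambda>s. pmf (state_dist T d0 x t) s" and ?v = "\<lambda>s. pmf (state_dist T d0 y t) s"
  let ?p = "\<lambda>s a. pmf (x t s) a" and ?q = "\<lambda>s a. pmf (y t s) a"
  have d0: "0 \<le> \<delta>" using cl[OF tN] by (meson abs_ge_zero order.trans)
  have "\<bar>step_reward T d0 R x t - step_reward T d0 R y t\<bar>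
     = \<bar>\<Sum>s\<in>UNIV. \<Sum>a\<in>UNIV. (?u s * ?p s a - ?v s * ?q s a) * R s a\<bar>"
    by (simp add: sr_eq sum_subtractf[symmetric] algebra_simps)
  also have "\<dots> \<le> (\<Sum>s\<in>UNIV. \<Sum>a\<in>UNIV. \<bar>?u s * ?p s a - ?v s * ?q s a\<bar> * Rm R)"
    by (intro order.trans[OF sum_abs] sum_mono order.trans[OF sum_abs])
       (simp add: abs_mult R_le mult_left_mono)
  also have "\<dots> = Rm R * (\<Sum>s\<in>UNIV. \<Sum>a\<in>UNIV. \<bar>?u s * ?p s a - ?v s * ?q s a\<bar>)"
    by (simp add: sum_distrib_left sum_distrib_right mult.commute)
  also have "\<dots> \<le> Rm R * ((\<Sum>s\<in>UNIV. \<bar>?u s - ?v s\<bar>) + real CARD('a) * \<delta>)"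
    by (intro mult_left_mono keyK Rm_nonneg) (auto simp: sum_pmf_UNIV intro: cl[OF tN])
  also have "\<dots> \<le> Rm R * (real N * real CARD('a) * \<delta> + real CARD('a) * \<delta>)"
  proof -
    have "(\<Sum>s\<in>UNIV. \<bar>?u s - ?v s\<bar>) \<le> real t * real CARD('a) * \<delta>"
      by (rule sd_close[OF cl]) (use tN in auto)
    also have "\<dots> \<le> real N * real CARD('a) * \<delta>"
      using tN d0 by (intro mult_right_mono) auto
    finally show ?thesis by (intro mult_left_mono Rm_nonneg) auto
  qed
  finally show ?thesis .
qed

lemma summable_J:
  fixes T :: "('s::finite,'a::finite) transition"
  assumes "0 \<le> \<gamma>" "\<gamma> < 1"
  shows "summable (\<lambda>t. \<gamma> ^ t * step_reward T d0 R x t)"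
proof (rule summable_comparison_test')
  show "summable (\<lambda>t. Rm R * \<gamma> ^ t)"
    using assms by (intro summable_mult summable_geometric) auto
  fix n :: nat
  show "norm (\<gamma> ^ n * step_reward T d0 R x n) \<le> Rm R * \<gamma> ^ n"
  proof -
    have "\<gamma> ^ n * \<bar>step_reward T d0 R x n\<bar> \<le> \<gamma> ^ n * Rm R"
      by (rule mult_left_mono[OF sr_bound]) (use assms in simp)
    thus ?thesis using assms by (simp add: abs_mult mult.commute)
  qed
qed

lemma J_close:
  fixes T :: "('s::finite,'a::finite) transition"
  assumes g0: "0 \<le> \<gamma>" and g1: "\<gamma> < 1"
    and cl: "\<And>t s a. t < N \<Longrightarrow> \<bar>pmf (x t s) a - pmf (y t s) a\<bar> \<le> \<delta>" and d0: "0 \<le> \<delta>"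
  shows "\<bar>J T d0 R \<gamma> x - J T d0 R \<gamma> y\<bar>
     \<le> real N * (Rm R * (real N * real CARD('a) * \<delta> + real CARD('a) * \<delta>)) + 2 * Rm R * \<gamma> ^ N / (1 - \<gamma>)"
proof -
  define c where "c = Rm R * (real N * real CARD('a) * \<delta> + real CARD('a) * \<delta>)"
  define a where "a t = \<gamma> ^ t * (step_reward T d0 R x t - step_reward T d0 R y t)" for t
  have sa: "summable a"
    unfolding a_def right_diff_distrib
    by (intro summable_diff summable_J g0 g1)
  have Ja: "J T d0 R \<gamma> x - J T d0 R \<gamma> y = suminf a"
    unfolding J_def a_def right_diff_distrib
    by (intro suminf_diff summable_J g0 g1)
  have split: "suminf a = (\<Sum>n. a (n + N)) + (\<Sum>i<N. a i)"
    by (rule suminf_split_initial_segment[OF sa])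
  have h1: "\<bar>\<Sum>i<N. a i\<bar> \<le> real N * c"
  proof -
    have bnd: "\<bar>a i\<bar> \<le> c" if iN: "i < N" for i
    proof -
      have "\<bar>a i\<bar> = \<gamma> ^ i * \<bar>step_reward T d0 R x i - step_reward T d0 R y i\<bar>"
        unfolding a_def using g0 by (simp add: abs_mult)
      also have "\<dots> \<le> 1 * c"
      proof -
        have h1: "\<gamma> ^ i \<le> 1" using g0 g1 by (simp add: power_le_one)
        have h2: "\<bar>step_reward T d0 R x i - step_reward T d0 R y i\<bar> \<le> c"
          unfolding c_def by (rule sr_close[OF cl iN])
        show ?thesis by (rule mult_mono[OF h1 h2]) simp_all
      qed
      finally show ?thesis by simp
    qed
    have "\<bar>\<Sum>i<N. a i\<bar> \<le> (\<Sum>i<N. \<bar>a i\<bar>)" by (rule sum_abs)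
    also have "\<dots> \<le> (\<Sum>i<N. c)"
      by (rule sum_mono) (simp add: bnd)
    finally show ?thesis by simp
  qed
  have h2: "\<bar>\<Sum>n. a (n + N)\<bar> \<le> 2 * Rm R * \<gamma> ^ N / (1 - \<gamma>)"
  proof -
    have "norm (\<Sum>n. a (n + N)) \<le> (\<Sum>n. (2 * Rm R * \<gamma> ^ N) * \<gamma> ^ n)"
    proof (rule norm_suminf_le)
      show "summable (\<lambda>n. (2 * Rm R * \<gamma> ^ N) * \<gamma> ^ n)"
        using g0 g1 by (intro summable_mult summable_geometric) auto
      fix n
      have "\<bar>step_reward T d0 R x (n + N) - step_reward T d0 R y (n + N)\<bar> \<le> 2 * Rm R"
        using sr_bound[of T d0 R x "n+N"] sr_bound[of T d0 R y "n+N"] by linarith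
      hence "\<gamma> ^ (n + N) * \<bar>step_reward T d0 R x (n + N) - step_reward T d0 R y (n + N)\<bar>
          \<le> \<gamma> ^ (n + N) * (2 * Rm R)"
        using g0 by (intro mult_left_mono) auto
      then show "norm (a (n + N)) \<le> (2 * Rm R * \<gamma> ^ N) * \<gamma> ^ n"
      proof -
        have "norm (a (n + N)) = \<gamma> ^ (n + N) * \<bar>step_reward T d0 R x (n + N) - step_reward T d0 R y (n + N)\<bar>"
          unfolding a_def using g0 by (simp add: abs_mult)
        also have "\<dots> \<le> \<gamma> ^ (n + N) * (2 * Rm R)" by fact
        also have "\<dots> = (2 * Rm R * \<gamma> ^ N) * \<gamma> ^ n" by (simp add: power_add)
        finally show ?thesis .
      qed
    qed
    also have "\<dots> = (2 * Rm R * \<gamma> ^ N) * (1 / (1 - \<gamma>))"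
      using g0 g1 by (subst suminf_mult) (auto simp: suminf_geometric)
    finally show ?thesis by simp
  qed
  show ?thesis
    using Ja split h1 h2 unfolding c_def by linarith
qed

lemma J_cont:
  fixes T :: "('s::finite,'a::finite) transition"
  assumes g0: "0 \<le> \<gamma>" and g1: "\<gamma> < 1" and e: "0 < e"
  shows "\<exists>N \<delta>. 0 < \<delta> \<and> (\<forall>x y. (\<forall>t s a. t < N \<longrightarrow> \<bar>pmf (x t s) a - pmf (y t s) a\<bar> \<le> \<delta>)
      \<longrightarrow> \<bar>J T d0 R \<gamma> x - J T d0 R \<gamma> y\<bar> < e)"
proof -
  have "\<exists>N. \<gamma> ^ N < e * (1 - \<gamma>) / (4 * (Rm R + 1))"
    using g1 e Rm_nonneg[of R] by (intro real_arch_pow_inv) (auto intro!: divide_pos_pos)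
  then obtain N where N: "\<gamma> ^ N < e * (1 - \<gamma>) / (4 * (Rm R + 1))" by blast
  have Rp: "0 \<le> Rm R" by (rule Rm_nonneg)
  have tail: "2 * Rm R * \<gamma> ^ N / (1 - \<gamma>) < e / 2"
  proof -
    have "2 * Rm R * \<gamma> ^ N \<le> 2 * (Rm R + 1) * \<gamma> ^ N"
      using g0 Rp by (intro mult_right_mono) auto
    also have "\<dots> < 2 * (Rm R + 1) * (e * (1 - \<gamma>) / (4 * (Rm R + 1)))"
      using N Rp by (intro mult_strict_left_mono) auto
    also have "\<dots> = e / 2 * (1 - \<gamma>)"
      using Rp by (simp add: field_simps)
    finally show ?thesis using g1 by (simp add: field_simps)
  qed
  define K where "K = real N * (Rm R * (real N * real CARD('a) + real CARD('a)))"
  have K0: "0 \<le> K" unfolding K_def using Rp by simp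
  define \<delta> where "\<delta> = e / (2 * (K + 1))"
  have dp: "0 < \<delta>" unfolding \<delta>_def using e K0 by simp
  have Kd: "K * \<delta> < e / 2"
  proof -
    have "K * \<delta> = e / 2 * (K / (K + 1))" unfolding \<delta>_def using K0 by (simp add: field_simps)
    also have "\<dots> < e / 2 * 1" using e K0 by (intro mult_strict_left_mono) auto
    finally show ?thesis by simp
  qed
  show ?thesis
  proof (intro exI conjI allI impI)
    show "0 < \<delta>" by (rule dp)
    fix x y :: "('s,'a) ns_policy" assume cl: "\<forall>t s a. t < N \<longrightarrow> \<bar>pmf (x t s) a - pmf (y t s) a\<bar> \<le> \<delta>"
    have "\<bar>J T d0 R \<gamma> x - J T d0 R \<gamma> y\<bar>
      \<le> real N * (Rm R * (real N * real CARD('a) * \<delta> + real CARD('a) * \<delta>)) + 2 * Rm R * \<gamma> ^ N / (1 - \<gamma>)"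
      using cl dp by (intro J_close g0 g1) auto
    also have "real N * (Rm R * (real N * real CARD('a) * \<delta> + real CARD('a) * \<delta>)) = K * \<delta>"
      unfolding K_def by (simp add: algebra_simps)
    finally show "\<bar>J T d0 R \<gamma> x - J T d0 R \<gamma> y\<bar> < e" using Kd tail by linarith
  qed
qed

definition mixp :: "real \<Rightarrow> 'b pmf \<Rightarrow> 'b pmf \<Rightarrow> 'b pmf" where
  "mixp l p q = bind_pmf (bernoulli_pmf l) (\<lambda>b. if b then q else p)"

lemma pmf_mixp: "0 \<le> l \<Longrightarrow> l \<le> 1 \<Longrightarrow> pmf (mixp l p q) a = (1 - l) * pmf p a + l * pmf q a"
  unfolding mixp_def pmf_bind exp_fin by (simp add: UNIV_bool algebra_simps)

lemma sd_agree:
  "(\<And>t'. t' < t \<Longrightarrow> x t' = y t') \<Longrightarrow> state_dist T d0 x t = state_dist T d0 y t"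
proof (induction t)
  case 0 then show ?case by simp
next
  case (Suc t)
  then show ?case by simp
qed

lemma sd_affine:
  fixes T :: "('s::finite,'a::finite) transition"
  assumes l0: "0 \<le> l" and l1: "l \<le> 1"
  shows "pmf (state_dist T d0 (x(k := \<lambda>s. mixp l (p s) (q s))) t) s' =
    (1 - l) * pmf (state_dist T d0 (x(k := p)) t) s' + l * pmf (state_dist T d0 (x(k := q)) t) s'"
proof (induction t arbitrary: s')
  case 0 then show ?case by (simp add: algebra_simps)
next
  case (Suc t)
  let ?m = "x(k := \<lambda>s. mixp l (p s) (q s))" and ?p = "x(k := p)" and ?q = "x(k := q)"
  show ?case
  proof (cases "t = k")
    case True
    have e1: "state_dist T d0 ?m t = state_dist T d0 x t" by (rule sd_agree) (use True in auto)
    have e2: "state_dist T d0 ?p t = state_dist T d0 x t" by (rule sd_agree) (use True in auto)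
    have e3: "state_dist T d0 ?q t = state_dist T d0 x t" by (rule sd_agree) (use True in auto)
    show ?thesis
      unfolding sd_Suc e1 e2 e3 using True
      by (simp add: pmf_mixp[OF l0 l1] sum_distrib_left sum.distrib sum_subtractf algebra_simps)
  next
    case False
    show ?thesis
      unfolding sd_Suc Suc.IH using False
      by (simp add: sum_distrib_left sum.distrib sum_subtractf algebra_simps)
  qed
qed

lemma sr_affine:
  fixes T :: "('s::finite,'a::finite) transition"
  assumes l0: "0 \<le> l" and l1: "l \<le> 1"
  shows "step_reward T d0 R (x(k := \<lambda>s. mixp l (p s) (q s))) t =
    (1 - l) * step_reward T d0 R (x(k := p)) t + l * step_reward T d0 R (x(k := q)) t"
proof (cases "t = k")
  case True
  let ?m = "x(k := \<lambda>s. mixp l (p s) (q s))" and ?p = "x(k := p)" and ?q = "x(k := q)"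
  have e1: "state_dist T d0 ?m t = state_dist T d0 x t" by (rule sd_agree) (use True in auto)
  have e2: "state_dist T d0 ?p t = state_dist T d0 x t" by (rule sd_agree) (use True in auto)
  have e3: "state_dist T d0 ?q t = state_dist T d0 x t" by (rule sd_agree) (use True in auto)
  show ?thesis
    unfolding sr_eq e1 e2 e3 using True
    by (simp add: pmf_mixp[OF l0 l1] sum_distrib_left sum.distrib sum_subtractf algebra_simps)
next
  case False
  show ?thesis
    unfolding sr_eq sd_affine[OF l0 l1] using False
    by (simp add: sum_distrib_left sum.distrib sum_subtractf algebra_simps)
qed

lemma J_affine:
  fixes T :: "('s::finite,'a::finite) transition"
  assumes l0: "0 \<le> l" and l1: "l \<le> 1" and g0: "0 \<le> \<gamma>" and g1: "\<gamma> < 1"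
  shows "J T d0 R \<gamma> (x(k := \<lambda>s. mixp l (p s) (q s))) =
    (1 - l) * J T d0 R \<gamma> (x(k := p)) + l * J T d0 R \<gamma> (x(k := q))"
proof -
  have "J T d0 R \<gamma> (x(k := \<lambda>s. mixp l (p s) (q s))) =
     (\<Sum>t. (1 - l) * (\<gamma> ^ t * step_reward T d0 R (x(k := p)) t) + l * (\<gamma> ^ t * step_reward T d0 R (x(k := q)) t))"
    unfolding J_def sr_affine[OF l0 l1] by (simp add: algebra_simps)
  also have "\<dots> = (\<Sum>t. (1 - l) * (\<gamma> ^ t * step_reward T d0 R (x(k := p)) t)) + (\<Sum>t. l * (\<gamma> ^ t * step_reward T d0 R (x(k := q)) t))"
    by (rule suminf_add[symmetric]) (intro summable_mult summable_J g0 g1)+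
  also have "\<dots> = (1 - l) * J T d0 R \<gamma> (x(k := p)) + l * J T d0 R \<gamma> (x(k := q))"
    unfolding J_def by (simp add: suminf_mult summable_J[OF g0 g1])
  finally show ?thesis .
qed

lemma pmf_diff_le1: "\<bar>pmf p c - pmf q c\<bar> \<le> 1"
  using pmf_le_1[of p c] pmf_nonneg[of p c] pmf_le_1[of q c] pmf_nonneg[of q c] by linarith

lemma core:
  fixes T1 T2 :: "('s::finite,'a::finite) transition" and \<pi> \<pi>' :: "('s,'a) ns_policy"
  assumes g0: "0 \<le> \<gamma>" and g1: "\<gamma> < 1"
    and NE: "\<forall>x y. J T1 d0 R \<gamma> x > J T1 d0 R \<gamma> y \<longrightarrow> J T2 d0 R \<gamma> y \<le> J T2 d0 R \<gamma> x"
    and eq: "J T1 d0 R \<gamma> \<pi> = J T1 d0 R \<gamma> \<pi>'" and lt: "J T2 d0 R \<gamma> \<pi> < J T2 d0 R \<gamma> \<pi>'"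
    and NT: "\<not> trivial_on (J T1 d0 R \<gamma>) UNIV"
  shows False
proof -
  define f where "f = J T1 d0 R \<gamma>"
  define g where "g = J T2 d0 R \<gamma>"
  define a where "a = f \<pi>"
  define b where "b = g \<pi>"
  define b' where "b' = g \<pi>'"
  have bb: "b < b'" unfolding b_def b'_def g_def by (rule lt)
  have mid: "f z = a" if h1: "b < g z" and h2: "g z < b'" for z
  proof -
    have "\<not> f z > f \<pi>'" using NE h2 unfolding f_def g_def b'_def by force
    moreover have "\<not> f \<pi> > f z" using NE h1 unfolding f_def g_def b_def by force
    ultimately show ?thesis unfolding a_def using eq unfolding f_def by linarith
  qed
  define \<rho> where "\<rho> l = (\<lambda>t s. mixp l (\<pi> t s) (\<pi>' t s))" for l
  have r0: "\<rho> 0 = \<pi>" unfolding \<rho>_def by (intro ext pmf_eqI) (simp add: pmf_mixp)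
  have r1: "\<rho> 1 = \<pi>'" unfolding \<rho>_def by (intro ext pmf_eqI) (simp add: pmf_mixp)
  have cont: "continuous_on {0..1} (\<lambda>l. g (\<rho> l))"
    unfolding continuous_on_iff
  proof (intro ballI allI impI)
    fix l :: real and e :: real assume l: "l \<in> {0..1}" and e: "0 < e"
    obtain N \<delta> where dp: "0 < \<delta>" and H: "\<forall>x y. (\<forall>t s a. t < N \<longrightarrow> \<bar>pmf (x t s) a - pmf (y t s) a\<bar> \<le> \<delta>)
      \<longrightarrow> \<bar>J T2 d0 R \<gamma> x - J T2 d0 R \<gamma> y\<bar> < e"
      using J_cont[OF g0 g1 e, of T2 d0 R] by blast
    show "\<exists>d>0. \<forall>l'\<in>{0..1}. dist l' l < d \<longrightarrow> dist (g (\<rho> l')) (g (\<rho> l)) < e"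
    proof (intro exI conjI ballI impI)
      show "0 < \<delta>" by (rule dp)
      fix l' :: real assume l': "l' \<in> {0..1}" and d: "dist l' l < \<delta>"
      have "\<bar>pmf (\<rho> l' t s) c - pmf (\<rho> l t s) c\<bar> \<le> \<delta>" for t s c
      proof -
        have "pmf (\<rho> l' t s) c - pmf (\<rho> l t s) c = (l' - l) * (pmf (\<pi>' t s) c - pmf (\<pi> t s) c)"
          unfolding \<rho>_def using l l' by (simp add: pmf_mixp algebra_simps)
        also have "\<bar>\<dots>\<bar> \<le> \<bar>l' - l\<bar> * 1"
          unfolding abs_mult
          by (intro mult_left_mono pmf_diff_le1) simp
        finally show ?thesis using d by (simp add: dist_real_def)
      qed
      thus "dist (g (\<rho> l')) (g (\<rho> l)) < e"
        using H unfolding g_def dist_real_def by blast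
    qed
  qed
  define m where "m = (b + b') / 2"
  obtain l0 where l0: "0 \<le> l0" "l0 \<le> 1" "g (\<rho> l0) = m"
    using IVT'[of "\<lambda>l. g (\<rho> l)" 0 m 1, OF _ _ _ cont] bb r0 r1 unfolding m_def b_def b'_def
    by auto
  define r where "r = \<rho> l0"
  have eb: "0 < (b' - b) / 2" using bb by simp
  obtain N \<delta> where dp: "0 < \<delta>" and H: "\<forall>x y. (\<forall>t s a. t < N \<longrightarrow> \<bar>pmf (x t s) a - pmf (y t s) a\<bar> \<le> \<delta>)
      \<longrightarrow> \<bar>J T2 d0 R \<gamma> x - J T2 d0 R \<gamma> y\<bar> < (b' - b) / 2"
    using J_cont[OF g0 g1 eb, of T2 d0 R] by blast
  have ball: "f z = a" if cz: "\<forall>t s c. t < N \<longrightarrow> \<bar>pmf (z t s) c - pmf (r t s) c\<bar> \<le> \<delta>" for z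
  proof -
    have A: "\<bar>g z - g r\<bar> < (b' - b) / 2" using H cz unfolding g_def by blast
    have B: "g r = (b + b') / 2" unfolding r_def m_def[symmetric] by (rule l0(3))
    have A1: "g z - g r < (b' - b) / 2" "- (g z - g r) < (b' - b) / 2"
      using A by (simp_all only: abs_less_iff)
    have "b < g z" using A1 B by (simp add: field_simps)
    moreover have "g z < b'" using A1 B by (simp add: field_simps)
    ultimately show ?thesis by (intro mid)
  qed
  have ind: "\<forall>z. (\<forall>t s c. k \<le> t \<and> t < N \<longrightarrow> \<bar>pmf (z t s) c - pmf (r t s) c\<bar> \<le> \<delta>) \<longrightarrow> f z = a"
    if "k \<le> N" for k
    using that
  proof (induction k)
    case 0
    then show ?case using ball by auto
  next
    case (Suc k)
    have IH: "\<And>z. (\<forall>t s c. k \<le> t \<and> t < N \<longrightarrow> \<bar>pmf (z t s) c - pmf (r t s) c\<bar> \<le> \<delta>) \<Longrightarrow> f z = a"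
      using Suc by auto
    show ?case
    proof (intro allI impI)
      fix z :: "('s,'a) ns_policy"
      assume cz: "\<forall>t s c. Suc k \<le> t \<and> t < N \<longrightarrow> \<bar>pmf (z t s) c - pmf (r t s) c\<bar> \<le> \<delta>"
      define l where "l = min \<delta> 1"
      have lp: "0 < l" "l \<le> 1" "l \<le> \<delta>" using dp unfolding l_def by auto
      have fm: "f (z(k := \<lambda>s. mixp l (r k s) (z k s))) = a"
      proof (rule IH, intro allI impI)
        fix t s c assume tt: "k \<le> t \<and> t < N"
        show "\<bar>pmf ((z(k := \<lambda>s. mixp l (r k s) (z k s))) t s) c - pmf (r t s) c\<bar> \<le> \<delta>"
        proof (cases "t = k")
          case True
          have "pmf ((z(k := \<lambda>s. mixp l (r k s) (z k s))) t s) c - pmf (r t s) c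
              = l * (pmf (z k s) c - pmf (r k s) c)"
            using True lp by (simp add: pmf_mixp algebra_simps)
          also have "\<bar>\<dots>\<bar> \<le> l * 1"
            unfolding abs_mult using lp
            by (simp add: mult_left_mono pmf_diff_le1)
          finally show ?thesis using lp by simp
        next
          case False
          then show ?thesis using cz tt by auto
        qed
      qed
      have fp: "f (z(k := r k)) = a"
      proof (rule IH, intro allI impI)
        fix t s c assume tt: "k \<le> t \<and> t < N"
        show "\<bar>pmf ((z(k := r k)) t s) c - pmf (r t s) c\<bar> \<le> \<delta>"
          using cz tt dp by (cases "t = k") auto
      qed
      have aff: "f (z(k := \<lambda>s. mixp l (r k s) (z k s))) = (1 - l) * f (z(k := r k)) + l * f (z(k := z k))"
        unfolding f_def by (rule J_affine) (use lp g0 g1 in auto)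
      hence "a = (1 - l) * a + l * f z" using fm fp by simp
      hence "l * (f z - a) = 0" by (simp only: right_diff_distrib left_diff_distrib mult_1_left)
      thus "f z = a" using lp by auto
    qed
  qed
  have "\<forall>z. f z = a" using ind[of N] by auto
  hence "trivial_on (J T1 d0 R \<gamma>) UNIV" unfolding trivial_on_def f_def by blast
  thus False using NT by contradiction
qed

theorem mainTheorem1:
  fixes T T' :: "('s::finite, 'a::finite) transition"
    and d0 :: "'s pmf" and R :: "'s \<Rightarrow> 'a \<Rightarrow> real" and \<gamma> :: real
  assumes "CARD('a) > 1"
    and "0 \<le> \<gamma>" and "\<gamma> < 1"
    and "all_reachable T d0" and "all_reachable T' d0"
    and "\<not> trivial_on (J T d0 R \<gamma>) UNIV"
    and "\<not> trivial_on (J T' d0 R \<gamma>) UNIV"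
    and "\<not> equivalent_on (J T d0 R \<gamma>) (J T' d0 R \<gamma>) UNIV"
  shows "exploitable T T' UNIV d0 R \<gamma>"
proof (rule ccontr)
  assume H: "\<not> exploitable T T' UNIV d0 R \<gamma>"
  have NE: "\<forall>x y. J T d0 R \<gamma> x > J T d0 R \<gamma> y \<longrightarrow> J T' d0 R \<gamma> y \<le> J T' d0 R \<gamma> x"
    using H unfolding exploitable_def by (meson UNIV_I not_le)
  have NE': "\<forall>x y. J T' d0 R \<gamma> x > J T' d0 R \<gamma> y \<longrightarrow> J T d0 R \<gamma> y \<le> J T d0 R \<gamma> x"
    using H unfolding exploitable_def by (meson UNIV_I not_le)
  obtain x y where xy: "\<not> (J T d0 R \<gamma> x \<ge> J T d0 R \<gamma> y \<longleftrightarrow> J T' d0 R \<gamma> x \<ge> J T' d0 R \<gamma> y)"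
    using assms(8) unfolding equivalent_on_def by blast
  show False
  proof (cases "J T d0 R \<gamma> x \<ge> J T d0 R \<gamma> y")
    case True
    with xy have lt: "J T' d0 R \<gamma> x < J T' d0 R \<gamma> y" by auto
    have "J T d0 R \<gamma> x \<le> J T d0 R \<gamma> y"
    proof (rule ccontr)
      assume "\<not> J T d0 R \<gamma> x \<le> J T d0 R \<gamma> y"
      hence "J T d0 R \<gamma> x > J T d0 R \<gamma> y" by simp
      from NE[rule_format, OF this] lt show False by linarith
    qed
    hence "J T d0 R \<gamma> x = J T d0 R \<gamma> y" using True by linarith
    then show False using core[OF assms(2,3) NE _ lt assms(6)] by blast
  next
    case False
    with xy have ge: "J T' d0 R \<gamma> x \<ge> J T' d0 R \<gamma> y" and lt: "J T d0 R \<gamma> x < J T d0 R \<gamma> y" by auto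
    have "J T' d0 R \<gamma> x = J T' d0 R \<gamma> y" using NE[rule_format, OF lt] ge by linarith
    then show False using core[OF assms(2,3) NE' _ lt assms(7)] by blast
  qed
qed

end
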